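(* Let $m$ and $n$ be positive integers and let $\alpha\in[0,1]$ be rational such that $\alpha nm$ is an integer. Let $E=(C,V)$ be an approval election with $m$ candidates, $n$ voters and $\mathrm{satr}(E)=\alpha$. If for each two candidates $c_j,c_k\in C$ we have $\big||A(c_j)|-|A(c_k)|\big|\le 1$, then $\mathrm{ehd}(E)$ is largest among all elections with $m$ candidates, $n$ voters and saturation $\alpha$.
   Context: An (approval) election is $E=(C,V)$ with $C=\{c_1,\dots,c_m\}$ and voters $V=(v_1,\dots,v_n)$, each vote a binary vector in $\{0,1\}^m$; $A(c)$ is the set of voters approving candidate $c$ and $A(v)$ the set of candidates approved by vote $v$. $\mathrm{satr}(E)=\frac{1}{nm}\sum_{v\in V}|A(v)|$. $\mathrm{ham}(u,v)=\sum_j|u[j]-v[j]|$, and $\mathrm{ehd}(E)=\sum_{u\in V}\sum_{v\in V}\mathrm{ham}(u,v)$ (over all ordered pairs of voters). *)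

theory Defs
  imports Complex_Main
begin

text \<open>An approval election with m candidates (indices 0..m-1) and n voters
(indices 0..n-1) is represented by V :: nat => nat => bool, where V i j means
voter i approves candidate j. Only values with i < n and j < m matter.\<close>

definition voter_approvals :: "nat \<Rightarrow> (nat \<Rightarrow> bool) \<Rightarrow> nat" where
  "voter_approvals m v = card {j. j < m \<and> v j}"

definition cand_approvals :: "nat \<Rightarrow> (nat \<Rightarrow> nat \<Rightarrow> bool) \<Rightarrow> nat \<Rightarrow> nat" where
  "cand_approvals n V j = card {i. i < n \<and> V i j}"

definition satr :: "nat \<Rightarrow> nat \<Rightarrow> (nat \<Rightarrow> nat \<Rightarrow> bool) \<Rightarrow> real" where
  "satr m n V = (\<Sum>i<n. real (voter_approvals m (V i))) / (real n * real m)"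

definition ham :: "nat \<Rightarrow> (nat \<Rightarrow> bool) \<Rightarrow> (nat \<Rightarrow> bool) \<Rightarrow> nat" where
  "ham m u v = card {j. j < m \<and> u j \<noteq> v j}"

definition ehd :: "nat \<Rightarrow> nat \<Rightarrow> (nat \<Rightarrow> nat \<Rightarrow> bool) \<Rightarrow> nat" where
  "ehd m n V = (\<Sum>i<n. \<Sum>k<n. ham m (V i) (V k))"

end

theory Submission
  imports Defs
begin

lemma card_ind: "card {j. j < (m::nat) \<and> P j} = (\<Sum>j<m. if P j then 1 else (0::nat))"
proof (induction m)
  case 0 then show ?case by simp
next
  case (Suc m)
  show ?case
  proof (cases "P m")
    case True
    have e: "{j. j < Suc m \<and> P j} = insert m {j. j < m \<and> P j}"
      using True by (auto simp: less_Suc_eq)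
    have "card {j. j < Suc m \<and> P j} = Suc (card {j. j < m \<and> P j})"
      unfolding e by (rule card_insert_disjoint) auto
    moreover have "(\<Sum>j<Suc m. if P j then 1 else (0::nat)) = (\<Sum>j<m. if P j then 1 else (0::nat)) + 1"
      using True by (simp only: sum.lessThan_Suc if_True)
    ultimately show ?thesis using Suc.IH by linarith
  next
    case False
    have e: "{j. j < Suc m \<and> P j} = {j. j < m \<and> P j}"
      using False by (auto simp: less_Suc_eq)
    then show ?thesis using Suc.IH False by (simp only: sum.lessThan_Suc if_False add_0_right)
  qed
qed

lemma card_ind2: "card {j. j < (m::nat) \<and> \<not> P j} = (\<Sum>j<m. if P j then 0 else (1::nat))"
  unfolding card_ind[of m "\<lambda>j. \<not> P j"] by (rule sum.cong) auto

lemma col_count: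
  fixes c :: "nat \<Rightarrow> bool"
  shows "int (\<Sum>i<n. \<Sum>k<n. if c i \<noteq> c k then 1 else (0::nat))
     = 2 * (int n * int (card {i. i < n \<and> c i}) - int (card {i. i < n \<and> c i})^2)"
proof -
  define a where "a = card {i. i < n \<and> c i}"
  have an: "a \<le> n" unfolding a_def
    by (metis (no_types, lifting) card_lessThan card_mono finite_lessThan lessThan_iff mem_Collect_eq subsetI)
  have cpart: "card {i. i < n \<and> \<not> c i} = n - a"
  proof -
    have "{..<n} = {i. i < n \<and> c i} \<union> {i. i < n \<and> \<not> c i}" by auto
    moreover have "{i. i < n \<and> c i} \<inter> {i. i < n \<and> \<not> c i} = {}" by auto
    ultimately have "n = a + card {i. i < n \<and> \<not> c i}"
      unfolding a_def by (metis card_Un_disjoint card_lessThan finite_Collect_conjI finite_lessThan lessThan_def mem_Collect_eq) 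
    thus ?thesis by simp
  qed
  have inner: "(\<Sum>k<n. if c i \<noteq> c k then 1 else (0::nat)) = (if c i then n - a else a)" for i
  proof (cases "c i")
    case True
    then have "(\<Sum>k<n. if c i \<noteq> c k then 1 else (0::nat)) = card {k. k < n \<and> \<not> c k}"
      by (simp add: card_ind)
    then show ?thesis using True cpart by simp
  next
    case False
    then have "(\<Sum>k<n. if c i \<noteq> c k then 1 else (0::nat)) = card {k. k < n \<and> c k}"
      by (simp add: card_ind)
    then show ?thesis using False a_def by simp
  qed
  have "(\<Sum>i<n. \<Sum>k<n. if c i \<noteq> c k then 1 else (0::nat)) = (\<Sum>i<n. if c i then n - a else a)"
    using inner by simp
  also have "\<dots> = (\<Sum>i<n. (if c i then 1 else 0) * (n - a) + (if c i then 0 else 1) * a)"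
    by (rule sum.cong) auto
  also have "\<dots> = (\<Sum>i<n. (if c i then 1 else 0)) * (n - a) + (\<Sum>i<n. (if c i then 0 else 1)) * a"
    by (simp only: sum.distrib sum_distrib_right)
  also have "\<dots> = a * (n - a) + (n - a) * a"
    by (simp only: card_ind[of n c, symmetric] card_ind2[of n c, symmetric] a_def[symmetric] cpart)
  finally have h: "(\<Sum>i<n. \<Sum>k<n. if c i \<noteq> c k then 1 else (0::nat)) = a * (n - a) + (n - a) * a" .
  have "int (\<Sum>i<n. \<Sum>k<n. if c i \<noteq> c k then 1 else (0::nat)) = int a * (int n - int a) + (int n - int a) * int a"
    by (simp only: h of_nat_add of_nat_mult of_nat_diff[OF an])
  then show ?thesis unfolding a_def[symmetric] by (simp add: power2_eq_square algebra_simps)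
qed

lemma ham_ind: "ham m u v = (\<Sum>j<m. if u j \<noteq> v j then 1 else (0::nat))"
  unfolding ham_def by (rule card_ind)

lemma ehd_formula:
  "int (ehd m n W) = (\<Sum>j<m. 2 * (int n * int (cand_approvals n W j) - int (cand_approvals n W j)^2))"
proof -
  have "ehd m n W = (\<Sum>i<n. \<Sum>k<n. \<Sum>j<m. if W i j \<noteq> W k j then 1 else (0::nat))"
    unfolding ehd_def ham_ind ..
  also have "\<dots> = (\<Sum>i<n. \<Sum>j<m. \<Sum>k<n. if W i j \<noteq> W k j then 1 else (0::nat))"
    by (rule sum.cong[OF refl], rule sum.swap)
  also have "\<dots> = (\<Sum>j<m. \<Sum>i<n. \<Sum>k<n. if W i j \<noteq> W k j then 1 else (0::nat))"
    by (rule sum.swap)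
  finally have "int (ehd m n W) = (\<Sum>j<m. int (\<Sum>i<n. \<Sum>k<n. if W i j \<noteq> W k j then 1 else (0::nat)))"
    by simp
  also have "\<dots> = (\<Sum>j<m. 2 * (int n * int (cand_approvals n W j) - int (cand_approvals n W j)^2))"
    unfolding cand_approvals_def by (rule sum.cong[OF refl], rule col_count)
  finally show ?thesis .
qed

lemma double_count:
  "(\<Sum>i<n. voter_approvals m (W i)) = (\<Sum>j<m. cand_approvals n W j)"
  unfolding voter_approvals_def cand_approvals_def card_ind by (rule sum.swap)

lemma sq_ineq:
  fixes x q :: int
  shows "(2*q+1)*x - q*(q+1) \<le> x^2"
proof -
  have "0 \<le> (x - q) * (x - q - 1)"
  proof (cases "x \<le> q")
    case True then show ?thesis by (intro mult_nonpos_nonpos) auto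
  next
    case False then show ?thesis by (intro mult_nonneg_nonneg) auto
  qed
  then show ?thesis by (simp add: power2_eq_square algebra_simps)
qed

lemma balanced_min:
  fixes a b :: "nat \<Rightarrow> int"
  assumes "m > 0"
    and bal: "\<forall>j<m. \<forall>k<m. \<bar>b j - b k\<bar> \<le> 1"
    and eq: "(\<Sum>j<m. a j) = (\<Sum>j<m. b j)"
  shows "(\<Sum>j<m. (b j)^2) \<le> (\<Sum>j<m. (a j)^2)"
proof -
  define q where "q = Min (b ` {..<m})"
  have fin: "finite (b ` {..<m})" and ne: "b ` {..<m} \<noteq> {}" using assms(1) by auto
  have qin: "q \<in> b ` {..<m}" unfolding q_def using Min_in[OF fin ne] .
  then obtain j0 where j0: "j0 < m" "b j0 = q" by auto
  have qle: "q \<le> b j" if "j < m" for j unfolding q_def using fin that by auto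
  have ble: "b j \<le> q + 1" if "j < m" for j using bal that j0 by fastforce
  have beq: "(b j)^2 = (2*q+1)*b j - q*(q+1)" if "j < m" for j
  proof -
    have "b j = q \<or> b j = q + 1" using qle[OF that] ble[OF that] by linarith
    then show ?thesis by (auto simp: power2_eq_square algebra_simps)
  qed
  have "(\<Sum>j<m. (b j)^2) = (\<Sum>j<m. (2*q+1)*b j - q*(q+1))"
    using beq by (rule sum.cong[OF refl]) simp
  also have "\<dots> = (2*q+1) * (\<Sum>j<m. b j) - of_nat m * (q*(q+1))"
    by (simp add: sum_subtractf sum_distrib_left)
  also have "\<dots> = (2*q+1) * (\<Sum>j<m. a j) - of_nat m * (q*(q+1))"
    using eq by simp
  also have "\<dots> = (\<Sum>j<m. (2*q+1)*a j - q*(q+1))"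
    by (simp add: sum_subtractf sum_distrib_left)
  also have "\<dots> \<le> (\<Sum>j<m. (a j)^2)"
    by (rule sum_mono) (rule sq_ineq)
  finally show ?thesis .
qed

theorem lemma3:
  fixes m n :: nat and \<alpha> :: real and V :: "nat \<Rightarrow> nat \<Rightarrow> bool"
  assumes "m > 0" and "n > 0"
    and "\<alpha> \<in> \<rat>" and "0 \<le> \<alpha>" and "\<alpha> \<le> 1"
    and "\<alpha> * real n * real m \<in> \<int>"
    and "satr m n V = \<alpha>"
    and "\<forall>j<m. \<forall>k<m. \<bar>int (cand_approvals n V j) - int (cand_approvals n V k)\<bar> \<le> 1"
  shows "\<forall>W :: nat \<Rightarrow> nat \<Rightarrow> bool. satr m n W = \<alpha> \<longrightarrow> ehd m n W \<le> ehd m n V"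
proof (intro allI impI)
  fix W :: "nat \<Rightarrow> nat \<Rightarrow> bool"
  assume sW: "satr m n W = \<alpha>"
  have pos: "real n * real m > 0" using assms(1,2) by simp
  have "(\<Sum>i<n. real (voter_approvals m (W i))) = (\<Sum>i<n. real (voter_approvals m (V i)))"
  proof -
    have "(\<Sum>i<n. real (voter_approvals m (W i))) / (real n * real m) = (\<Sum>i<n. real (voter_approvals m (V i))) / (real n * real m)"
      using sW assms(7) unfolding satr_def by simp
    then show ?thesis using pos divide_cancel_right by auto
  qed
  then have "real (\<Sum>i<n. voter_approvals m (W i)) = real (\<Sum>i<n. voter_approvals m (V i))"
    by simp
  then have "(\<Sum>i<n. voter_approvals m (W i)) = (\<Sum>i<n. voter_approvals m (V i))"
    using of_nat_eq_iff by blast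
  then have S: "(\<Sum>j<m. cand_approvals n W j) = (\<Sum>j<m. cand_approvals n V j)"
    by (simp add: double_count)
  define a where "a j = int (cand_approvals n W j)" for j
  define b where "b j = int (cand_approvals n V j)" for j
  have Sab: "(\<Sum>j<m. a j) = (\<Sum>j<m. b j)"
    unfolding a_def b_def using S by (metis of_nat_sum)
  have sq: "(\<Sum>j<m. (b j)^2) \<le> (\<Sum>j<m. (a j)^2)"
    by (rule balanced_min[OF assms(1) _ Sab]) (use assms(8) b_def in auto)
  have "int (ehd m n W) = (\<Sum>j<m. 2 * (int n * a j - (a j)^2))"
    unfolding ehd_formula a_def ..
  also have "\<dots> = 2 * int n * (\<Sum>j<m. a j) - 2 * (\<Sum>j<m. (a j)^2)"
    by (simp add: sum_subtractf sum_distrib_left algebra_simps)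
  also have "\<dots> \<le> 2 * int n * (\<Sum>j<m. b j) - 2 * (\<Sum>j<m. (b j)^2)"
    using Sab sq by simp
  also have "\<dots> = (\<Sum>j<m. 2 * (int n * b j - (b j)^2))"
    by (simp add: sum_subtractf sum_distrib_left algebra_simps)
  also have "\<dots> = int (ehd m n V)"
    unfolding ehd_formula b_def ..
  finally show "ehd m n W \<le> ehd m n V" by simp
qed

end
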